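(* Let there be $k$ bidders and $n$ items, bidder $i$ having additive valuation with private values $v_{ij}\ge0$ drawn from publicly known independent distributions. Let $s^*=\mathbb{E}[\sum_j\max_i v_{ij}]$ and define the reserve-welfare mechanism: set the reserve welfare $\hat s=(1-\epsilon)s^*$; given bids $b_{ij}$, if $\sum_j\max_i b_{ij}<\hat s$ then no item is allocated and nobody pays; otherwise allocate the items according to an allocation $(S_1,\dots,S_k)$ (disjoint sets of items) maximizing $\sum_i\sum_{j\in S_i}b_{ij}$ and charge each bidder $i$ the price $p_i=\hat s-\sum_{\ell\ne i}\sum_{j\in S_\ell}b_{\ell j}$. If $\sum_j\max_i v_{ij}$ is $(\epsilon,\delta)$-concentrated for constants $\frac13>\epsilon>0$ and $1>\delta>0$, then the reserve-welfare mechanism is deterministically truthful, individually rational, and its expected revenue is at least $(1-k\epsilon-k\delta)\,s^*$.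
   Context: A random variable $X$ is $(\epsilon,\delta)$-concentrated if $X\in((1-\epsilon)\mathbb{E}[X],(1+\epsilon)\mathbb{E}[X])$ with probability at least $1-\delta$. Bidder $i$'s utility is $\sum_{j\in S_i}v_{ij}-p_i$ (zero if nothing is allocated and nothing paid). Deterministically truthful: for every $i$ and every bids of the others, reporting $v_i$ maximizes bidder $i$'s utility. Individually rational: truthful reporting always gives nonnegative utility. Expected revenue: $\mathbb{E}[\sum_i p_i]$ under truthful bidding. *)

theory Defs
  imports "HOL-Probability.Probability"
begin

text \<open>Bidders are 0..k-1, items are 0..n-1. A bid (or value) profile is
  b :: nat => nat => real, where b i j is bidder i's bid for item j.
  An allocation assigns to each bidder i a set S i of items.\<close>

type_synonym profile = "nat \<Rightarrow> nat \<Rightarrow> real"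

definition valid_bids :: "nat \<Rightarrow> nat \<Rightarrow> profile \<Rightarrow> bool" where
  "valid_bids k n b \<longleftrightarrow> (\<forall>i<k. \<forall>j<n. 0 \<le> b i j)"

definition sum_max :: "nat \<Rightarrow> nat \<Rightarrow> profile \<Rightarrow> real" where
  "sum_max k n b = (\<Sum>j<n. Max ((\<lambda>i. b i j) ` {..<k}))"

definition is_allocation :: "nat \<Rightarrow> nat \<Rightarrow> (nat \<Rightarrow> nat set) \<Rightarrow> bool" where
  "is_allocation k n S \<longleftrightarrow> (\<forall>i<k. S i \<subseteq> {..<n}) \<and>
     (\<forall>i<k. \<forall>l<k. i \<noteq> l \<longrightarrow> S i \<inter> S l = {})"

definition alloc_welfare :: "nat \<Rightarrow> profile \<Rightarrow> (nat \<Rightarrow> nat set) \<Rightarrow> real" where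
  "alloc_welfare k b S = (\<Sum>i<k. \<Sum>j\<in>S i. b i j)"

definition optimal_allocation :: "nat \<Rightarrow> nat \<Rightarrow> profile \<Rightarrow> (nat \<Rightarrow> nat set) \<Rightarrow> bool" where
  "optimal_allocation k n b S \<longleftrightarrow> is_allocation k n S \<and>
     (\<forall>S'. is_allocation k n S' \<longrightarrow> alloc_welfare k b S' \<le> alloc_welfare k b S)"

definition rw_allocation :: "nat \<Rightarrow> nat \<Rightarrow> real \<Rightarrow> (profile \<Rightarrow> nat \<Rightarrow> nat set) \<Rightarrow> profile \<Rightarrow> nat \<Rightarrow> nat set" where
  "rw_allocation k n r A b = (if sum_max k n b < r then (\<lambda>_. {}) else A b)"

definition rw_payment :: "nat \<Rightarrow> nat \<Rightarrow> real \<Rightarrow> (profile \<Rightarrow> nat \<Rightarrow> nat set) \<Rightarrow> profile \<Rightarrow> nat \<Rightarrow> real" where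
  "rw_payment k n r A b i = (if sum_max k n b < r then 0
      else r - (\<Sum>l\<in>{..<k} - {i}. \<Sum>j\<in>A b l. b l j))"

definition utility :: "(profile \<Rightarrow> nat \<Rightarrow> nat set) \<Rightarrow> (profile \<Rightarrow> nat \<Rightarrow> real) \<Rightarrow>
    (nat \<Rightarrow> real) \<Rightarrow> profile \<Rightarrow> nat \<Rightarrow> real" where
  "utility X P vi b i = (\<Sum>j\<in>X b i. vi j) - P b i"

definition deterministically_truthful :: "nat \<Rightarrow> nat \<Rightarrow> (profile \<Rightarrow> nat \<Rightarrow> nat set) \<Rightarrow>
    (profile \<Rightarrow> nat \<Rightarrow> real) \<Rightarrow> bool" where
  "deterministically_truthful k n X P \<longleftrightarrow>
     (\<forall>i<k. \<forall>vi b bi. (\<forall>j<n. 0 \<le> vi j) \<longrightarrow> (\<forall>j<n. 0 \<le> bi j) \<longrightarrow> valid_bids k n b \<longrightarrow>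
        utility X P vi (b(i := bi)) i \<le> utility X P vi (b(i := vi)) i)"

definition individually_rational :: "nat \<Rightarrow> nat \<Rightarrow> (profile \<Rightarrow> nat \<Rightarrow> nat set) \<Rightarrow>
    (profile \<Rightarrow> nat \<Rightarrow> real) \<Rightarrow> bool" where
  "individually_rational k n X P \<longleftrightarrow>
     (\<forall>i<k. \<forall>vi b. (\<forall>j<n. 0 \<le> vi j) \<longrightarrow> valid_bids k n b \<longrightarrow>
        0 \<le> utility X P vi (b(i := vi)) i)"

definition concentrated :: "'a measure \<Rightarrow> ('a \<Rightarrow> real) \<Rightarrow> real \<Rightarrow> real \<Rightarrow> bool" where
  "concentrated M X \<epsilon> \<delta> \<longleftrightarrow>
     1 - \<delta> \<le> measure M {\<omega>\<in>space M. (1 - \<epsilon>) * (\<integral>x. X x \<partial>M) < X \<omega> \<and> X \<omega> < (1 + \<epsilon>) * (\<integral>x. X x \<partial>M)}"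

end

theory Submission
  imports Defs
begin

lemma max_ge:
  fixes k :: nat and b :: profile
  assumes "k \<ge> 1" "i < k"
  shows "b i j \<le> Max ((\<lambda>i. b i j) ` {..<k})"
  using assms by (intro Max_ge) auto

lemma max_nonneg:
  fixes k :: nat
  assumes "k \<ge> 1" "valid_bids k n b" "j < n"
  shows "0 \<le> Max ((\<lambda>i. b i j) ` {..<k})"
  using assms max_ge[of k 0 b j] unfolding valid_bids_def by (meson order_trans less_le_trans zero_less_one)

lemma welfare_le:
  assumes "k \<ge> 1" "valid_bids k n b" "is_allocation k n S"
  shows "alloc_welfare k b S \<le> sum_max k n b"
proof -
  define m where "m j = Max ((\<lambda>i. b i j) ` {..<k})" for j
  have fin: "\<And>i. i < k \<Longrightarrow> finite (S i)"
    using assms(3) unfolding is_allocation_def by (meson finite_lessThan finite_subset)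
  have "alloc_welfare k b S \<le> (\<Sum>i<k. \<Sum>j\<in>S i. m j)"
    unfolding alloc_welfare_def m_def
    by (intro sum_mono max_ge assms(1)) auto
  also have "\<dots> = sum m (\<Union>i<k. S i)"
    using assms(3) fin unfolding is_allocation_def
    by (intro sum.UNION_disjoint[symmetric]) auto
  also have "\<dots> \<le> sum m {..<n}"
    using assms(3) unfolding is_allocation_def m_def
    by (intro sum_mono2 max_nonneg[OF assms(1,2)]) auto
  finally show ?thesis unfolding sum_max_def m_def .
qed

lemma welfare_exists:
  fixes k :: nat
  assumes "k \<ge> 1"
  shows "\<exists>S. is_allocation k n S \<and> alloc_welfare k b S = sum_max k n b"
proof -
  define m where "m j = Max ((\<lambda>i. b i j) ` {..<k})" for j
  define g where "g j = (SOME i. i < k \<and> b i j = m j)" for j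
  have g: "g j < k \<and> b (g j) j = m j" for j
  proof -
    have "m j \<in> (\<lambda>i. b i j) ` {..<k}" unfolding m_def using assms by (intro Max_in) (auto simp: lessThan_empty_iff)
    then have "\<exists>i. i < k \<and> b i j = m j" by auto
    then show ?thesis unfolding g_def by (rule someI_ex)
  qed
  define S where "S i = {j. j \<in> {..<n} \<and> g j = i}" for i
  have "is_allocation k n S" unfolding is_allocation_def S_def by auto
  moreover have "alloc_welfare k b S = sum_max k n b"
  proof -
    have "alloc_welfare k b S = (\<Sum>i<k. \<Sum>j\<in>S i. m j)"
      unfolding alloc_welfare_def S_def using g by (intro sum.cong refl) auto
    also have "\<dots> = sum m {..<n}" unfolding S_def
      by (rule sum.group) (use g in auto)
    finally show ?thesis unfolding sum_max_def m_def .
  qed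
  ultimately show ?thesis by blast
qed

lemma welfare_opt:
  assumes "k \<ge> 1" "valid_bids k n b" "optimal_allocation k n b S"
  shows "alloc_welfare k b S = sum_max k n b"
  using welfare_le[OF assms(1,2)] welfare_exists[OF assms(1), of n b] assms(3)
  unfolding optimal_allocation_def by (metis order_antisym)

lemma util_eq:
  assumes "i < k"
  shows "utility (rw_allocation k n r A) (rw_payment k n r A) vi (b(i:=x)) i =
    (if sum_max k n (b(i:=x)) < r then 0 else alloc_welfare k (b(i:=vi)) (A (b(i:=x))) - r)"
proof -
  have i: "i \<in> {..<k}" using assms by simp
  have "alloc_welfare k (b(i:=vi)) (A (b(i:=x))) = (\<Sum>j\<in>A (b(i:=x)) i. vi j)
      + (\<Sum>l\<in>{..<k} - {i}. \<Sum>j\<in>A (b(i:=x)) l. (b(i:=x)) l j)"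
    unfolding alloc_welfare_def by (subst sum.remove[OF _ i]) (auto intro!: sum.cong)
  then show ?thesis
    unfolding utility_def rw_allocation_def rw_payment_def by auto
qed


lemma truthful_part:
  fixes k :: nat
  assumes "k \<ge> 1" "\<forall>b. valid_bids k n b \<longrightarrow> optimal_allocation k n b (A b)"
  shows "deterministically_truthful k n (rw_allocation k n r A) (rw_payment k n r A)
       \<and> individually_rational k n (rw_allocation k n r A) (rw_payment k n r A)"
proof -
  have main: "utility (rw_allocation k n r A) (rw_payment k n r A) vi (b(i:=x)) i
      \<le> utility (rw_allocation k n r A) (rw_payment k n r A) vi (b(i:=vi)) i
      \<and> 0 \<le> utility (rw_allocation k n r A) (rw_payment k n r A) vi (b(i:=vi)) i"
    if i: "i < k" and vi: "\<forall>j<n. 0 \<le> vi j" and x: "\<forall>j<n. 0 \<le> x j" and b: "valid_bids k n b"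
    for i vi b x
  proof -
    let ?t = "b(i:=vi)" and ?b' = "b(i:=x)"
    have vt: "valid_bids k n ?t" and vb: "valid_bids k n ?b'"
      using vi x b unfolding valid_bids_def by auto
    have Wt: "alloc_welfare k ?t (A ?t) = sum_max k n ?t"
      using welfare_opt[OF assms(1) vt] assms(2) vt by blast
    have al: "is_allocation k n (A ?b')" using assms(2) vb unfolding optimal_allocation_def by blast
    have le: "alloc_welfare k ?t (A ?b') \<le> sum_max k n ?t"
      by (rule welfare_le[OF assms(1) vt al])
    show ?thesis
      unfolding util_eq[OF i, of n r A vi b x] util_eq[OF i, of n r A vi b vi] Wt
      using le by auto
  qed
  show ?thesis
    unfolding deterministically_truthful_def individually_rational_def
    using main by blast
qed

theorem theorem7:
  fixes M :: "'a measure" and V :: "nat \<Rightarrow> nat \<Rightarrow> 'a \<Rightarrow> real"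
    and k n :: nat and \<epsilon> \<delta> :: real
    and A :: "profile \<Rightarrow> nat \<Rightarrow> nat set"
  assumes "prob_space M"
    and "k \<ge> 1"
    and "prob_space.indep_vars M (\<lambda>_. borel) (\<lambda>(i, j). V i j) ({..<k} \<times> {..<n})"
    and "\<forall>i<k. \<forall>j<n. \<forall>\<omega>\<in>space M. 0 \<le> V i j \<omega>"
    and "integrable M (\<lambda>\<omega>. sum_max k n (\<lambda>i j. V i j \<omega>))"
    and "0 < \<epsilon>" and "\<epsilon> < 1/3" and "0 < \<delta>" and "\<delta> < 1"
    and "concentrated M (\<lambda>\<omega>. sum_max k n (\<lambda>i j. V i j \<omega>)) \<epsilon> \<delta>"
    and "\<forall>b. valid_bids k n b \<longrightarrow> optimal_allocation k n b (A b)"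
  defines "s \<equiv> \<integral>\<omega>. sum_max k n (\<lambda>i j. V i j \<omega>) \<partial>M"
    and "r \<equiv> (1 - \<epsilon>) * (\<integral>\<omega>. sum_max k n (\<lambda>i j. V i j \<omega>) \<partial>M)"
  shows "deterministically_truthful k n (rw_allocation k n r A) (rw_payment k n r A)
       \<and> individually_rational k n (rw_allocation k n r A) (rw_payment k n r A)
       \<and> (\<integral>\<omega>. (\<Sum>i<k. rw_payment k n r A (\<lambda>i j. V i j \<omega>) i) \<partial>M)
            \<ge> (1 - real k * \<epsilon> - real k * \<delta>) * s"
proof -
  interpret prob_space M by fact
  define W where "W \<omega> = sum_max k n (\<lambda>i j. V i j \<omega>)" for \<omega>
  have Wint: "integrable M W" using assms(5) unfolding W_def .
  have Wmeas[measurable]: "W \<in> borel_measurable M" using Wint by auto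
  have s_def': "s = integral\<^sup>L M W" unfolding s_def W_def ..
  have r_eq: "r = (1 - \<epsilon>) * s" unfolding r_def s_def ..
  have valid: "valid_bids k n (\<lambda>i j. V i j \<omega>)" if "\<omega> \<in> space M" for \<omega>
    using assms(4) that unfolding valid_bids_def by auto
  have Wnn: "0 \<le> W \<omega>" if "\<omega> \<in> space M" for \<omega>
    unfolding W_def sum_max_def using max_nonneg[OF assms(2) valid[OF that]] by (auto intro: sum_nonneg)
  have s_nn: "0 \<le> s" unfolding s_def' using Wnn by (auto intro: integral_nonneg_AE)
  have r_nn: "0 \<le> r" using r_eq s_nn assms(7) by auto
  have pay: "(\<Sum>i<k. rw_payment k n r A (\<lambda>i j. V i j \<omega>) i) =
      indicator {\<omega>\<in>space M. r \<le> W \<omega>} \<omega> * (real k * r - (real k - 1) * W \<omega>)"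
    if \<omega>: "\<omega> \<in> space M" for \<omega>
  proof (cases "W \<omega> < r")
    case True then show ?thesis using \<omega> unfolding rw_payment_def W_def by auto
  next
    case False
    let ?b = "\<lambda>i j. V i j \<omega>"
    define w where "w l = (\<Sum>j\<in>A ?b l. ?b l j)" for l
    have tot: "sum w {..<k} = W \<omega>"
      using welfare_opt[OF assms(2) valid[OF \<omega>]] assms(11) valid[OF \<omega>]
      unfolding w_def alloc_welfare_def W_def by auto
    have "(\<Sum>i<k. rw_payment k n r A ?b i) = (\<Sum>i<k. r - (W \<omega> - w i))"
    proof (intro sum.cong refl)
      fix i assume "i \<in> {..<k}"
      then have "sum w ({..<k} - {i}) = sum w {..<k} - w i" by (simp add: sum_diff1)
      then show "rw_payment k n r A ?b i = r - (W \<omega> - w i)"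
        using False tot unfolding rw_payment_def w_def W_def by auto
    qed
    also have "\<dots> = real k * r - real k * W \<omega> + W \<omega>"
      using tot by (simp add: sum.distrib sum_subtractf)
    finally show ?thesis using False \<omega> by (simp add: algebra_simps)
  qed
  define E where "E = {\<omega>\<in>space M. (1 - \<epsilon>) * s < W \<omega> \<and> W \<omega> < (1 + \<epsilon>) * s}"
  have E_meas[measurable]: "E \<in> sets M" unfolding E_def by measurable
  have PE: "1 - \<delta> \<le> prob E"
    using assms(10) unfolding concentrated_def E_def W_def s_def by simp
  define f where "f \<omega> = indicator {\<omega>\<in>space M. r \<le> W \<omega>} \<omega> * (real k * r - (real k - 1) * W \<omega>)" for \<omega>
  have f_int: "integrable M f"
  proof -
    have "integrable M (\<lambda>\<omega>. (real k * r - (real k - 1) * W \<omega>) * indicator {\<omega>\<in>space M. r \<le> W \<omega>} \<omega>)"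
      by (intro integrable_real_mult_indicator Bochner_Integration.integrable_diff integrable_const Wint integrable_mult_right) auto
    then show ?thesis unfolding f_def by (simp add: mult.commute)
  qed
  define g where "g \<omega> = real k * r * indicator E \<omega> - (real k - 1) * W \<omega>" for \<omega>
  have g_int: "integrable M g" unfolding g_def
    by (intro Bochner_Integration.integrable_diff integrable_mult_right Wint integrable_real_indicator E_meas) (auto simp: less_top[symmetric])
  have fg: "g \<omega> \<le> f \<omega>" if \<omega>: "\<omega> \<in> space M" for \<omega>
  proof -
    have k1: "0 \<le> real k - 1" using assms(2) by simp
    have "0 \<le> (real k - 1) * W \<omega>" using k1 Wnn[OF \<omega>] by simp
    moreover have "\<omega> \<in> E \<Longrightarrow> r \<le> W \<omega>" unfolding E_def r_eq by auto
    ultimately show ?thesis unfolding f_def g_def using r_nn \<omega>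
      by (auto simp: indicator_def)
  qed
  have "integral\<^sup>L M g = real k * r * prob E - (real k - 1) * s"
  proof -
    have iE: "integrable M (\<lambda>\<omega>. real k * r * indicator E \<omega>)"
      by (intro integrable_mult_right integrable_real_indicator E_meas) (auto simp: less_top[symmetric])
    have iW: "integrable M (\<lambda>\<omega>. (real k - 1) * W \<omega>)" by (intro integrable_mult_right Wint)
    have "integral\<^sup>L M g = integral\<^sup>L M (\<lambda>\<omega>. real k * r * indicator E \<omega>) - integral\<^sup>L M (\<lambda>\<omega>. (real k - 1) * W \<omega>)"
      unfolding g_def by (rule Bochner_Integration.integral_diff[OF iE iW])
    also have "\<dots> = real k * r * prob E - (real k - 1) * s"
      unfolding s_def' using E_meas by (simp add: Int_absorb2 sets.sets_into_space)
    finally show ?thesis .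
  qed
  also have "\<dots> \<ge> real k * r * (1 - \<delta>) - (real k - 1) * s"
    using PE r_nn by (simp add: mult_left_mono)
  finally have g_ge: "integral\<^sup>L M g \<ge> real k * r * (1 - \<delta>) - (real k - 1) * s" .
  have "integral\<^sup>L M g \<le> integral\<^sup>L M f"
    using fg by (intro integral_mono_AE g_int f_int) auto
  moreover have "(\<integral>\<omega>. (\<Sum>i<k. rw_payment k n r A (\<lambda>i j. V i j \<omega>) i) \<partial>M) = integral\<^sup>L M f"
    using pay unfolding f_def by (intro Bochner_Integration.integral_cong refl) auto
  moreover have "real k * r * (1 - \<delta>) - (real k - 1) * s \<ge> (1 - real k * \<epsilon> - real k * \<delta>) * s"
  proof -
    have "real k * r * (1 - \<delta>) - (real k - 1) * s
        = (1 - real k * \<epsilon> - real k * \<delta>) * s + real k * \<epsilon> * \<delta> * s"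
      unfolding r_eq by (simp add: algebra_simps)
    moreover have "0 \<le> real k * \<epsilon> * \<delta> * s" using assms(6,8) s_nn by simp
    ultimately show ?thesis by linarith
  qed
  ultimately have "(\<integral>\<omega>. (\<Sum>i<k. rw_payment k n r A (\<lambda>i j. V i j \<omega>) i) \<partial>M)
      \<ge> (1 - real k * \<epsilon> - real k * \<delta>) * s" using g_ge by linarith
  then show ?thesis using truthful_part[OF assms(2,11)] by blast
qed

end
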